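(* Let $q\ge2$ and $L\ge2$ be integers, let $\mathcal{C}\subseteq[q]^n$ be a code, and suppose the matrix $\varphi(\mathcal{C})/\sqrt{(q-1)n}$ satisfies RIP-2 of order $L$ with constant $1/2$. Then $\mathcal{C}$ is $\Big(\big(1-\frac1q\big)\big(1-\sqrt{\frac{1.5}{L-1}}\big),\,L-1\Big)$-list decodable.
   Context: $[q]=\{0,1,\dots,q-1\}$; $\delta(x,y)$ is the fraction of coordinates where $x,y\in[q]^n$ differ. A code $\mathcal{C}$ is $(\rho,\ell)$-list decodable if for every $y\in[q]^n$ the number of $c\in\mathcal{C}$ with $\delta(c,y)<\rho$ is at most $\ell$. Simplex encoding: for $x\in[q]$, $\varphi(x)\in\mathbb{C}^{q-1}$ has coordinates $\varphi(x)(\alpha)=\omega^{x\alpha}$ for $\alpha\in\{1,\dots,q-1\}$, $\omega=e^{2\pi\mathbf{i}/q}$; for $x\in[q]^n$, $\varphi(x)\in\mathbb{C}^{n(q-1)}$ is the concatenation of $\varphi(x_1),\dots,\varphi(x_n)$. $\varphi(\mathcal{C})$ is the $(q-1)n\times|\mathcal{C}|$ matrix whose column indexed by $c\in\mathcal{C}$ is $\varphi(c)$. A matrix $M\in\mathbb{C}^{m\times N}$ satisfies RIP-2 of order $k$ with constant $\delta$ if for every $x\in\mathbb{C}^N$ with at most $k$ nonzero entries, $(1-\delta)\|x\|_2^2\le\|Mx\|_2^2\le(1+\delta)\|x\|_2^2$. *)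

theory Defs
  imports "HOL-Analysis.Analysis"
begin

definition words :: "nat \<Rightarrow> nat \<Rightarrow> nat list set" where
  "words q n = {x. length x = n \<and> (\<forall>i<n. x ! i < q)}"

definition rel_dist :: "nat list \<Rightarrow> nat list \<Rightarrow> real" where
  "rel_dist x y = real (card {i. i < length x \<and> x ! i \<noteq> y ! i}) / real (length x)"

definition list_decodable :: "nat \<Rightarrow> nat \<Rightarrow> nat list set \<Rightarrow> real \<Rightarrow> nat \<Rightarrow> bool" where
  "list_decodable q n C \<rho> l \<longleftrightarrow>
     (\<forall>y \<in> words q n. card {c \<in> C. rel_dist c y < \<rho>} \<le> l)"

definition omega :: "nat \<Rightarrow> complex" where
  "omega q = exp (2 * complex_of_real pi * \<i> / of_nat q)"

definition simplex_enc :: "nat \<Rightarrow> nat \<Rightarrow> nat \<Rightarrow> complex" where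
  "simplex_enc q x \<alpha> = omega q ^ (x * \<alpha>)"

text \<open>Matrix M = phi(C) scaled by s, rows indexed by pairs (i, alpha) with i < n and
  1 <= alpha <= q-1, columns indexed by codewords c in C. Squared norm of M x for a
  vector x indexed by C (only coordinates in C matter).\<close>
definition enc_sqnorm :: "nat \<Rightarrow> nat \<Rightarrow> nat list set \<Rightarrow> real \<Rightarrow> (nat list \<Rightarrow> complex) \<Rightarrow> real" where
  "enc_sqnorm q n C s x =
     (\<Sum>i<n. \<Sum>\<alpha>\<in>{1..q-1}.
        (cmod (\<Sum>c\<in>C. complex_of_real s * simplex_enc q (c ! i) \<alpha> * x c))\<^sup>2)"

definition RIP2 :: "nat \<Rightarrow> nat \<Rightarrow> nat list set \<Rightarrow> real \<Rightarrow> nat \<Rightarrow> real \<Rightarrow> bool" where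
  "RIP2 q n C s k \<delta> \<longleftrightarrow>
     (\<forall>x :: nat list \<Rightarrow> complex.
        card {c \<in> C. x c \<noteq> 0} \<le> k \<longrightarrow>
        (1 - \<delta>) * (\<Sum>c\<in>C. (cmod (x c))\<^sup>2) \<le> enc_sqnorm q n C s x \<and>
        enc_sqnorm q n C s x \<le> (1 + \<delta>) * (\<Sum>c\<in>C. (cmod (x c))\<^sup>2))"

end

theory Submission
  imports Defs
begin


lemma omega_norm: "q > 0 \<Longrightarrow> cmod (omega q) = 1"
  by (simp add: omega_def)

lemma omega_pow_q: "q > 0 \<Longrightarrow> omega q ^ q = 1"
proof -
  assume q: "q > 0"
  have "omega q ^ q = exp (of_nat q * (2 * complex_of_real pi * \<i> / of_nat q))"
    unfolding omega_def exp_of_nat_mult ..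
  also have "\<dots> = exp (2 * complex_of_real pi * \<i>)" using q by simp
  also have "\<dots> = 1" by simp
  finally show ?thesis .
qed

lemma omega_pow_inj:
  assumes q: "q > 0" and a: "a < q" and b: "b < q" and eq: "omega q ^ a = omega q ^ b"
  shows "a = b"
proof -
  have "exp (of_nat a * (2 * complex_of_real pi * \<i> / of_nat q)) =
        exp (of_nat b * (2 * complex_of_real pi * \<i> / of_nat q))"
    using eq unfolding omega_def exp_of_nat_mult .
  then obtain k :: int where k: "of_nat a * (2 * complex_of_real pi * \<i> / of_nat q) =
     of_nat b * (2 * complex_of_real pi * \<i> / of_nat q) + (of_int (2 * k) * pi) * \<i>"
    by (auto simp: exp_eq)
  then have "Im (of_nat a * (2 * complex_of_real pi * \<i> / of_nat q)) =
     Im (of_nat b * (2 * complex_of_real pi * \<i> / of_nat q) + (of_int (2 * k) * pi) * \<i>)"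
    by simp
  then have "real a * (2 * pi / real q) = real b * (2 * pi / real q) + 2 * real_of_int k * pi"
    by simp
  then have "real a * (2 * pi) = real b * (2 * pi) + 2 * real_of_int k * pi * real q"
    using q by (simp add: field_simps)
  then have "(real a - real b) * pi = real_of_int k * real q * pi"
    by (simp add: algebra_simps)
  then have h: "real a - real b = real_of_int k * real q" by simp
  have "- real q < real_of_int k * real q" "real_of_int k * real q < real q"
    using a b h by linarith+
  moreover have "real_of_int k \<le> -1 \<Longrightarrow> real_of_int k * real q \<le> - real q"
    using mult_right_mono[of "real_of_int k" "-1" "real q"] by simp
  moreover have "real_of_int k \<ge> 1 \<Longrightarrow> real_of_int k * real q \<ge> real q"
    using mult_right_mono[of 1 "real_of_int k" "real q"] by simp
  ultimately have "-1 < real_of_int k" "real_of_int k < 1" by linarith+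
  then have "k = 0" by linarith
  then show ?thesis using h by simp
qed

lemma root_sum:
  assumes q: "q \<ge> 2" and a: "a < q" and b: "b < q"
  shows "(\<Sum>\<alpha>\<in>{1..q-1}. omega q ^ (a*\<alpha>) * cnj (omega q ^ (b*\<alpha>))) =
         (if a = b then of_nat (q-1) else -1)"
proof -
  define z where "z = omega q ^ a * cnj (omega q ^ b)"
  have tm: "omega q ^ (a*\<alpha>) * cnj (omega q ^ (b*\<alpha>)) = z ^ \<alpha>" for \<alpha>
    by (simp add: z_def power_mult power_mult_distrib)
  have nrm: "cmod (omega q ^ k) = 1" for k using q by (simp add: norm_power omega_norm)
  have unit: "omega q ^ k * cnj (omega q ^ k) = 1" for k
    using nrm[of k] by (metis complex_norm_square of_real_1 power_one)
  show ?thesis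
  proof (cases "a = b")
    case True
    then have "z = 1" using unit by (simp add: z_def)
    then show ?thesis using True unfolding tm by simp
  next
    case False
    have "z \<noteq> 1"
    proof
      assume "z = 1"
      then have z1: "omega q ^ a * cnj (omega q ^ b) = 1" by (simp add: z_def)
      have "omega q ^ a = omega q ^ a * (omega q ^ b * cnj (omega q ^ b))" using unit[of b] by simp
      also have "\<dots> = (omega q ^ a * cnj (omega q ^ b)) * omega q ^ b" by (simp only: ac_simps)
      also have "\<dots> = omega q ^ b" using z1 by simp
      finally have "omega q ^ a = omega q ^ b" .
      then show False using omega_pow_inj[OF _ a b] q False by simp
    qed
    have zq: "z ^ q = 1"
    proof -
      have "z ^ q = (omega q ^ q) ^ a * cnj ((omega q ^ q) ^ b)"
        by (simp add: z_def power_mult_distrib flip: power_mult) (simp add: mult.commute)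
      then show ?thesis using omega_pow_q q by simp
    qed
    have "(\<Sum>\<alpha><q. z ^ \<alpha>) = 0"
      using \<open>z \<noteq> 1\<close> zq by (simp add: geometric_sum)
    moreover have "{..<q} = insert 0 {1..q-1}" using q by auto
    ultimately have "1 + (\<Sum>\<alpha>\<in>{1..q-1}. z ^ \<alpha>) = 0" by simp
    then have "(\<Sum>\<alpha>\<in>{1..q-1}. z ^ \<alpha>) = -1" by (simp add: add_eq_0_iff)
    then show ?thesis using False unfolding tm by simp
  qed
qed



lemma cs_flat:
  fixes a b :: "'i \<Rightarrow> complex"
  assumes fin: "finite I" and Qpos: "(\<Sum>i\<in>I. (cmod (b i))\<^sup>2) > 0"
  shows "(Re (\<Sum>i\<in>I. a i * cnj (b i)))\<^sup>2 \<le> (\<Sum>i\<in>I. (cmod (a i))\<^sup>2) * (\<Sum>i\<in>I. (cmod (b i))\<^sup>2)"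
proof -
  define P where "P = (\<Sum>i\<in>I. (cmod (a i))\<^sup>2)"
  define Q where "Q = (\<Sum>i\<in>I. (cmod (b i))\<^sup>2)"
  define R where "R = Re (\<Sum>i\<in>I. a i * cnj (b i))"
  have id: "(cmod (a i - of_real t * b i))\<^sup>2 = (cmod (a i))\<^sup>2 - 2 * t * Re (a i * cnj (b i)) + t\<^sup>2 * (cmod (b i))\<^sup>2"
    for i t
    by (simp only: cmod_power2) (simp add: power2_eq_square algebra_simps)
  have "0 \<le> (\<Sum>i\<in>I. (cmod (a i - of_real t * b i))\<^sup>2)" for t
    by (rule sum_nonneg) simp
  also have "(\<Sum>i\<in>I. (cmod (a i - of_real t * b i))\<^sup>2) = P - 2 * t * R + t\<^sup>2 * Q" for t
    by (simp add: id sum.distrib sum_subtractf sum_distrib_left P_def Q_def R_def Re_sum flip: sum_distrib_left)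
  finally have ineq: "0 \<le> P - 2 * t * R + t\<^sup>2 * Q" for t .
  have Q0: "Q > 0" using Qpos Q_def by simp
  have "0 \<le> P - 2 * (R/Q) * R + (R/Q)\<^sup>2 * Q" by (rule ineq)
  also have "\<dots> = P - R\<^sup>2 / Q" using Q0 by (simp add: power2_eq_square field_simps)
  finally have "R\<^sup>2 / Q \<le> P" by simp
  then have "R\<^sup>2 \<le> P * Q" using Q0 by (simp add: divide_le_eq)
  then show ?thesis by (simp add: P_def Q_def R_def)
qed

lemma cs_nested:
  fixes a b :: "'i \<Rightarrow> 'j \<Rightarrow> complex"
  assumes "finite I" "finite J" and Qpos: "(\<Sum>i\<in>I. \<Sum>j\<in>J. (cmod (b i j))\<^sup>2) > 0"
  shows "(Re (\<Sum>i\<in>I. \<Sum>j\<in>J. a i j * cnj (b i j)))\<^sup>2 \<le>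
     (\<Sum>i\<in>I. \<Sum>j\<in>J. (cmod (a i j))\<^sup>2) * (\<Sum>i\<in>I. \<Sum>j\<in>J. (cmod (b i j))\<^sup>2)"
  using cs_flat[of "I \<times> J" "case_prod b" "case_prod a"] assms
  unfolding sum.cartesian_product by (simp add: case_prod_beta)

lemma finite_words: "finite (words q n)"
proof -
  have "words q n \<subseteq> {xs. set xs \<subseteq> {..<q} \<and> length xs = n}"
    by (auto simp: words_def in_set_conv_nth)
  then show ?thesis using finite_lists_length_eq[of "{..<q}" n] finite_subset by blast
qed



lemma count_sum:
  assumes "c \<in> words q n" "y \<in> words q n" "q \<ge> 2"
  shows "Re (\<Sum>i<n. \<Sum>\<alpha>\<in>{1..q-1}. omega q ^ ((c!i)*\<alpha>) * cnj (omega q ^ ((y!i)*\<alpha>)))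
    = real ((q-1)*n) - real q * real (card {i. i < length c \<and> c ! i \<noteq> y ! i})"
proof -
  have lc: "length c = n" using assms by (simp add: words_def)
  have "(\<Sum>i<n. \<Sum>\<alpha>\<in>{1..q-1}. omega q ^ ((c!i)*\<alpha>) * cnj (omega q ^ ((y!i)*\<alpha>)))
     = (\<Sum>i<n. if c!i = y!i then of_nat (q-1) else -1)"
    by (rule sum.cong[OF refl], rule root_sum) (use assms in \<open>auto simp: words_def\<close>)
  then have "Re (\<Sum>i<n. \<Sum>\<alpha>\<in>{1..q-1}. omega q ^ ((c!i)*\<alpha>) * cnj (omega q ^ ((y!i)*\<alpha>)))
     = (\<Sum>i<n. if c!i = y!i then real (q-1) else -1)"
    by (simp add: Re_sum if_distrib cong: if_cong)
  also have "\<dots> = (\<Sum>i<n. real (q-1) - real q * (if c!i \<noteq> y!i then 1 else 0))"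
    using assms by (intro sum.cong) (auto simp: of_nat_diff)
  also have "\<dots> = real n * real (q-1) - real q * (\<Sum>i<n. (if c!i \<noteq> y!i then 1 else 0))"
    by (simp add: sum_subtractf sum_distrib_left)
  also have "(\<Sum>i<n. (if c!i \<noteq> y!i then 1 else 0)) = real (card {i. i < length c \<and> c ! i \<noteq> y ! i})"
  proof -
    have "{i. i < length c \<and> c ! i \<noteq> y ! i} = {..<n} \<inter> {i. c!i \<noteq> y!i}" using lc by auto
    then show ?thesis by (simp add: sum.If_cases)
  qed
  finally show ?thesis by (simp add: mult.commute)
qed



theorem theorem3p5:
  fixes q L n :: nat and C :: "nat list set"
  assumes "q \<ge> 2" and "L \<ge> 2"
    and "C \<subseteq> words q n"
    and "RIP2 q n C (1 / sqrt (real ((q - 1) * n))) L (1/2)"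
  shows "list_decodable q n C ((1 - 1 / real q) * (1 - sqrt (1.5 / (real L - 1)))) (L - 1)"
proof -
  note q = assms(1) and L2 = assms(2) and Cw = assms(3) and rip = assms(4)
  define \<sigma> where "\<sigma> = sqrt (1.5 / (real L - 1))"
  define \<rho> where "\<rho> = (1 - 1 / real q) * (1 - \<sigma>)"
  define s where "s = 1 / sqrt (real ((q - 1) * n))"
  define Q where "Q = real ((q - 1) * n)"
  have finC: "finite C" using Cw finite_words finite_subset by blast
  show ?thesis unfolding list_decodable_def \<rho>_def[symmetric] \<sigma>_def[symmetric]
  proof
    fix y assume y: "y \<in> words q n"
    define T where "T = {c \<in> C. rel_dist c y < \<rho>}"
    show "card T \<le> L - 1"
    proof (rule ccontr)
      assume "\<not> card T \<le> L - 1"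
      then have "L \<le> card T" by simp
      then obtain S where ST: "S \<subseteq> T" and cS: "card S = L" and fS: "finite S"
        by (rule obtain_subset_with_card_n)
      have SC: "S \<subseteq> C" using ST T_def by auto
      define x where "x = (\<lambda>c. if c \<in> S then (1::complex) else 0)"
      have supp: "{c\<in>C. x c \<noteq> 0} = S" using SC by (auto simp: x_def)
      have sumx: "(\<Sum>c\<in>C. (cmod (x c))\<^sup>2) = real L"
      proof -
        have "(\<Sum>c\<in>C. (cmod (x c))\<^sup>2) = (\<Sum>c\<in>C. if c \<in> S then 1 else 0)"
          by (rule sum.cong) (auto simp: x_def)
        also have "\<dots> = real (card (C \<inter> {c. c \<in> S}))" using finC by (simp add: sum.If_cases)
        also have "C \<inter> {c. c \<in> S} = S" using SC by auto
        finally show ?thesis using cS by simp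
      qed
      from rip have ripx: "(1 - 1/2) * real L \<le> enc_sqnorm q n C s x"
          "enc_sqnorm q n C s x \<le> (1 + 1/2) * real L"
        unfolding RIP2_def s_def[symmetric] using supp cS sumx by auto
      show False
      proof (cases "n = 0")
        case True
        then have "enc_sqnorm q n C s x = 0" by (simp add: enc_sqnorm_def)
        then show False using ripx L2 by simp
      next
        case False
        then have npos: "n > 0" by simp
        have Qpos: "Q > 0" using q npos by (simp add: Q_def)
        have s2: "s\<^sup>2 = 1 / Q" using Qpos by (simp add: s_def Q_def power_divide)
        define A where "A = (\<lambda>i \<alpha>. \<Sum>c\<in>S. omega q ^ ((c!i)*\<alpha>))"
        define B where "B = (\<lambda>i \<alpha>. omega q ^ ((y!i)*\<alpha>))"
        define P where "P = (\<Sum>i<n. \<Sum>\<alpha>\<in>{1..q-1}. (cmod (A i \<alpha>))\<^sup>2)"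
        have inner: "(\<Sum>c\<in>C. complex_of_real s * simplex_enc q (c ! i) \<alpha> * x c) = complex_of_real s * A i \<alpha>" for i \<alpha>
        proof -
          have "(\<Sum>c\<in>C. complex_of_real s * simplex_enc q (c ! i) \<alpha> * x c)
              = (\<Sum>c\<in>C. if c \<in> S then complex_of_real s * simplex_enc q (c ! i) \<alpha> else 0)"
            by (rule sum.cong) (auto simp: x_def)
          also have "\<dots> = (\<Sum>c\<in>C \<inter> S. complex_of_real s * simplex_enc q (c ! i) \<alpha>)"
            using finC by (simp add: sum.inter_restrict)
          also have "C \<inter> S = S" using SC by auto
          finally show ?thesis by (simp add: A_def simplex_enc_def sum_distrib_left)
        qed
        have "enc_sqnorm q n C s x = s\<^sup>2 * P"
          unfolding enc_sqnorm_def inner P_def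
          by (simp add: norm_mult power_mult_distrib sum_distrib_left)
        then have "P = Q * enc_sqnorm q n C s x" using s2 Qpos by (simp add: field_simps)
        also have "\<dots> \<le> Q * ((1 + 1/2) * real L)" using ripx(2) Qpos by (intro mult_left_mono) auto
        finally have Ple: "P \<le> 1.5 * real L * Q" by (simp add: mult.commute)
        have QB: "(\<Sum>i<n. \<Sum>\<alpha>\<in>{1..q-1}. (cmod (B i \<alpha>))\<^sup>2) = Q"
        proof -
          have "cmod (B i \<alpha>) = 1" for i \<alpha> using q by (simp add: B_def norm_power omega_norm)
          then show ?thesis using q by (simp add: Q_def of_nat_diff)
        qed
        define R where "R = Re (\<Sum>i<n. \<Sum>\<alpha>\<in>{1..q-1}. A i \<alpha> * cnj (B i \<alpha>))"
        have CS: "R\<^sup>2 \<le> P * Q"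
          using cs_nested[of "{..<n}" "{1..q-1}" B A] Qpos QB by (simp add: R_def P_def)
        define d where "d = (\<lambda>c. real (card {i. i < length c \<and> c ! i \<noteq> y ! i}))"
        have Rsum: "R = (\<Sum>c\<in>S. Q - real q * d c)"
        proof -
          have "(\<Sum>i<n. \<Sum>\<alpha>\<in>{1..q-1}. A i \<alpha> * cnj (B i \<alpha>)) =
              (\<Sum>c\<in>S. \<Sum>i<n. \<Sum>\<alpha>\<in>{1..q-1}. omega q ^ ((c!i)*\<alpha>) * cnj (omega q ^ ((y!i)*\<alpha>)))"
            unfolding A_def B_def sum_distrib_right
            by (subst sum.swap, rule sum.cong[OF refl], subst sum.swap, rule refl)
          then have "R = (\<Sum>c\<in>S. Re (\<Sum>i<n. \<Sum>\<alpha>\<in>{1..q-1}. omega q ^ ((c!i)*\<alpha>) * cnj (omega q ^ ((y!i)*\<alpha>))))"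
            by (simp only: R_def Re_sum)
          also have "\<dots> = (\<Sum>c\<in>S. Q - real q * d c)"
            apply (rule sum.cong[OF refl])
            apply (subst count_sum)
            using SC Cw y q by (auto simp: Q_def d_def)
          finally show ?thesis .
        qed
        have \<sigma>0: "\<sigma> \<ge> 0" using L2 by (simp add: \<sigma>_def)
        have each: "Q * \<sigma> < Q - real q * d c" if c: "c \<in> S" for c
        proof -
          have cT: "rel_dist c y < \<rho>" using c ST T_def by auto
          have lc: "length c = n" using c SC Cw by (auto simp: words_def)
          have "d c / real n < \<rho>" using cT by (simp add: rel_dist_def d_def lc)
          then have "d c < \<rho> * real n" using npos by (simp add: divide_less_eq)
          then have "real q * d c < real q * (\<rho> * real n)" using q by simp
          also have "real q * (\<rho> * real n) = Q * (1 - \<sigma>)"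
            using q by (simp add: \<rho>_def Q_def of_nat_diff field_simps)
          finally show ?thesis by (simp add: algebra_simps)
        qed
        have "(\<Sum>c\<in>S. Q * \<sigma>) < (\<Sum>c\<in>S. Q - real q * d c)"
          using fS cS L2 each by (intro sum_strict_mono) auto
        then have Rgt: "real L * Q * \<sigma> < R" using cS Rsum by simp
        have "0 \<le> real L * Q * \<sigma>" using Qpos \<sigma>0 by simp
        then have "(real L * Q * \<sigma>)\<^sup>2 < R\<^sup>2" using Rgt by (intro power_strict_mono) auto
        also have "\<dots> \<le> 1.5 * real L * Q * Q" using CS Ple Qpos
          by (smt (verit) mult_right_mono)
        finally have h: "(real L)\<^sup>2 * Q\<^sup>2 * \<sigma>\<^sup>2 < 1.5 * real L * Q * Q"
          by (simp add: power_mult_distrib)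
        have "\<sigma>\<^sup>2 = 1.5 / (real L - 1)" using L2 by (simp add: \<sigma>_def)
        then have "(real L)\<^sup>2 * Q\<^sup>2 * (1.5 / (real L - 1)) < 1.5 * real L * Q * Q" using h by simp
        then have "((real L)\<^sup>2 * (1.5 / (real L - 1))) * (Q * Q) < (1.5 * real L) * (Q * Q)"
          by (simp add: power2_eq_square mult_ac)
        then have "(real L)\<^sup>2 * (1.5 / (real L - 1)) < 1.5 * real L" using Qpos
          by (simp only: mult_less_cancel_right) simp
        then have "(real L)\<^sup>2 * 1.5 < 1.5 * real L * (real L - 1)" using L2
          by (simp add: field_simps)
        then show False by (simp add: power2_eq_square algebra_simps)
      qed
    qed
  qed
qed


end
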